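(* Let $N=n+m$ with $n,m\ge 2$, and let $f=x_0p_0+x_1p_1+\cdots+x_np_n+g\in K[x_0,\dots,x_n,u_1,\dots,u_m]_d$ define a Perazzo hypersurface $X=V(f)\subseteq\mathbb{P}^N$ of degree $d\ge 3$. If $X$ is a cone, then $X$ is projectively equivalent to a cone with vertex a point over a Perazzo hypersurface $Y\subseteq\mathbb{P}^{N-1}$ of degree $d$.
   Context: $K$ is an algebraically closed field of characteristic zero. A Perazzo hypersurface $X\subset\mathbb{P}^N$ ($N\ge 4$) of degree $d\ge 3$ is a hypersurface defined by a form $f\in K[x_0,\dots,x_n,u_1,\dots,u_m]$ of the form $f=x_0p_0+x_1p_1+\cdots+x_np_n+g$, where $n,m$ are integers with $n+m=N$, $n,m\ge 2$, the $p_i\in K[u_1,\dots,u_m]_{d-1}$ are algebraically dependent but linearly independent over $K$, and $g\in K[u_1,\dots,u_m]_d$. A hypersurface $V(f)$ is a cone if, after a linear change of the variables, $f$ does not involve one of the variables (equivalently, the partial derivatives of $f$ are linearly dependent). *)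

theory Defs
  imports "HOL-Computational_Algebra.Polynomial"
begin

text \<open>Polynomials over an infinite field are represented by their (polynomial)
  functions; over an infinite field this is a faithful representation.\<close>

definition exps :: "nat set \<Rightarrow> (nat \<Rightarrow> nat) set" where
  "exps V = {\<alpha>. \<forall>i. i \<notin> V \<longrightarrow> \<alpha> i = 0}"

definition is_form :: "nat set \<Rightarrow> nat \<Rightarrow> ((nat \<Rightarrow> 'a::comm_ring_1) \<Rightarrow> 'a) \<Rightarrow> bool" where
  "is_form V d F \<longleftrightarrow> (\<exists>c. \<forall>x. F x =
      (\<Sum>\<alpha>\<in>{\<alpha>\<in>exps V. (\<Sum>i\<in>V. \<alpha> i) = d}. c \<alpha> * (\<Prod>i\<in>V. x i ^ \<alpha> i)))"

definition is_poly :: "nat set \<Rightarrow> ((nat \<Rightarrow> 'a::comm_ring_1) \<Rightarrow> 'a) \<Rightarrow> bool" where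
  "is_poly V F \<longleftrightarrow> (\<exists>D c. \<forall>x. F x =
      (\<Sum>\<alpha>\<in>{\<alpha>\<in>exps V. (\<Sum>i\<in>V. \<alpha> i) \<le> D}. c \<alpha> * (\<Prod>i\<in>V. x i ^ \<alpha> i)))"

definition lin_indep :: "nat \<Rightarrow> (nat \<Rightarrow> (nat \<Rightarrow> 'a::field) \<Rightarrow> 'a) \<Rightarrow> bool" where
  "lin_indep n p \<longleftrightarrow> (\<forall>c. (\<forall>x. (\<Sum>i\<le>n. c i * p i x) = 0) \<longrightarrow> (\<forall>i\<le>n. c i = 0))"

definition alg_dep :: "nat \<Rightarrow> (nat \<Rightarrow> (nat \<Rightarrow> 'a::field) \<Rightarrow> 'a) \<Rightarrow> bool" where
  "alg_dep n p \<longleftrightarrow> (\<exists>P. is_poly {0..n} P \<and> (\<exists>y. P y \<noteq> 0) \<and>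
       (\<forall>x. P (\<lambda>i. p i x) = 0))"

text \<open>Perazzo form in P^(n+m): variables x_0..x_n are indices 0..n,
  variables u_1..u_m are indices n+1..n+m.\<close>
definition perazzo_form :: "nat \<Rightarrow> nat \<Rightarrow> nat \<Rightarrow> ((nat \<Rightarrow> 'a::field) \<Rightarrow> 'a) \<Rightarrow> bool" where
  "perazzo_form n m d F \<longleftrightarrow> 2 \<le> n \<and> 2 \<le> m \<and> 3 \<le> d \<and>
     (\<exists>p g. (\<forall>i\<le>n. is_form {n+1..n+m} (d-1) (p i)) \<and> is_form {n+1..n+m} d g \<and>
        alg_dep n p \<and> lin_indep n p \<and>
        (\<forall>x. F x = (\<Sum>i\<le>n. x i * p i x) + g x))"

definition lin_app :: "nat \<Rightarrow> (nat \<Rightarrow> nat \<Rightarrow> 'a::comm_ring_1) \<Rightarrow> (nat \<Rightarrow> 'a) \<Rightarrow> (nat \<Rightarrow> 'a)" where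
  "lin_app N A x = (\<lambda>i. if i \<le> N then (\<Sum>j\<le>N. A i j * x j) else 0)"

definition invertible_mat :: "nat \<Rightarrow> (nat \<Rightarrow> nat \<Rightarrow> 'a::comm_ring_1) \<Rightarrow> bool" where
  "invertible_mat N A \<longleftrightarrow> (\<exists>B. \<forall>i\<le>N. \<forall>k\<le>N.
      (\<Sum>j\<le>N. A i j * B j k) = (if i = k then 1 else 0) \<and>
      (\<Sum>j\<le>N. B i j * A j k) = (if i = k then 1 else 0))"

definition not_involving :: "nat \<Rightarrow> ((nat \<Rightarrow> 'a) \<Rightarrow> 'b) \<Rightarrow> bool" where
  "not_involving k F \<longleftrightarrow> (\<forall>x t. F (x(k := t)) = F x)"

definition is_cone :: "nat \<Rightarrow> ((nat \<Rightarrow> 'a::comm_ring_1) \<Rightarrow> 'a) \<Rightarrow> bool" where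
  "is_cone N F \<longleftrightarrow> (\<exists>A k. invertible_mat N A \<and> k \<le> N \<and>
       not_involving k (\<lambda>x. F (lin_app N A x)))"

end

theory Submission imports Defs begin

lemma finite_S: "finite V \<Longrightarrow> finite {\<alpha>\<in>exps V. (\<Sum>i\<in>V. \<alpha> i) = d}"
proof -
  assume fV: "finite V"
  have "{\<alpha>\<in>exps V. (\<Sum>i\<in>V. \<alpha> i) = d} \<subseteq> {\<alpha>. \<forall>x. (x \<in> V \<longrightarrow> \<alpha> x \<in> {0..d}) \<and> (x \<notin> V \<longrightarrow> \<alpha> x = 0)}"
  proof (clarsimp simp: exps_def)
    fix \<alpha> x assume "\<forall>i. i \<notin> V \<longrightarrow> \<alpha> i = 0" "x \<in> V" "d = sum \<alpha> V"
    then show "\<alpha> x \<le> sum \<alpha> V" using fV by (simp add: member_le_sum)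
  qed
  moreover have "finite {\<alpha>. \<forall>x. (x \<in> V \<longrightarrow> \<alpha> x \<in> {0..d}) \<and> (x \<notin> V \<longrightarrow> \<alpha> x = (0::nat))}"
    by (rule finite_set_of_finite_funs) (use fV in auto)
  ultimately show ?thesis by (rule finite_subset)
qed

lemma form_local:
  assumes "is_form V d F" "\<forall>i\<in>V. x i = y i"
  shows "F x = F y"
  using assms unfolding is_form_def by auto

lemma form_perm:
  fixes F :: "(nat \<Rightarrow> 'a::comm_ring_1) \<Rightarrow> 'a"
  assumes F: "is_form V d F" and fin: "finite V"
    and inv: "\<And>i. \<sigma> (\<sigma> i) = i" and pres: "\<And>i. i \<in> V \<longleftrightarrow> \<sigma> i \<in> V"
  shows "is_form V d (\<lambda>x. F (x \<circ> \<sigma>))"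
proof -
  obtain c where c: "\<And>x. F x = (\<Sum>\<alpha>\<in>{\<alpha>\<in>exps V. (\<Sum>i\<in>V. \<alpha> i) = d}. c \<alpha> * (\<Prod>i\<in>V. x i ^ \<alpha> i))"
    using F unfolding is_form_def by blast
  let ?S = "{\<alpha>\<in>exps V. (\<Sum>i\<in>V. \<alpha> i) = d}"
  have bijV: "bij_betw \<sigma> V V"
    by (rule bij_betw_byWitness[where f'=\<sigma>]) (use pres inv in auto)
  have sumr: "(\<Sum>i\<in>V. h (\<sigma> i)) = (\<Sum>i\<in>V. h i)" for h :: "nat \<Rightarrow> nat"
    using sum.reindex_bij_betw[OF bijV, of h] by simp
  have prodr: "(\<Prod>i\<in>V. h (\<sigma> i)) = (\<Prod>i\<in>V. h i)" for h :: "nat \<Rightarrow> 'a"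
    using prod.reindex_bij_betw[OF bijV, of h] by simp
  have bijS: "bij_betw (\<lambda>\<alpha>. \<alpha> \<circ> \<sigma>) ?S ?S"
  proof (rule bij_betw_byWitness[where f'="\<lambda>\<alpha>. \<alpha> \<circ> \<sigma>"])
    show "(\<lambda>\<alpha>. \<alpha> \<circ> \<sigma>) ` ?S \<subseteq> ?S"
      using pres sumr by (auto simp: exps_def)
    then show "(\<lambda>\<alpha>. \<alpha> \<circ> \<sigma>) ` ?S \<subseteq> ?S" .
    show "\<forall>x\<in>?S. x \<circ> \<sigma> \<circ> \<sigma> = x" "\<forall>x\<in>?S. x \<circ> \<sigma> \<circ> \<sigma> = x"
      using inv by (auto simp: fun_eq_iff)
  qed
  have "F (x \<circ> \<sigma>) = (\<Sum>\<alpha>\<in>?S. c (\<alpha> \<circ> \<sigma>) * (\<Prod>i\<in>V. x i ^ \<alpha> i))" for x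
  proof -
    have "F (x \<circ> \<sigma>) = (\<Sum>\<alpha>\<in>?S. c \<alpha> * (\<Prod>i\<in>V. x (\<sigma> i) ^ \<alpha> i))" using c by simp
    also have "\<dots> = (\<Sum>\<alpha>\<in>?S. c \<alpha> * (\<Prod>i\<in>V. x i ^ (\<alpha> \<circ> \<sigma>) i))"
    proof (rule sum.cong[OF refl])
      fix \<alpha>
      have "(\<Prod>i\<in>V. x (\<sigma> i) ^ \<alpha> i) = (\<Prod>i\<in>V. x (\<sigma> i) ^ \<alpha> (\<sigma> (\<sigma> i)))" using inv by simp
      also have "\<dots> = (\<Prod>i\<in>V. x i ^ \<alpha> (\<sigma> i))" using prodr[of "\<lambda>j. x j ^ \<alpha> (\<sigma> j)"] by simp
      finally show "c \<alpha> * (\<Prod>i\<in>V. x (\<sigma> i) ^ \<alpha> i) = c \<alpha> * (\<Prod>i\<in>V. x i ^ (\<alpha> \<circ> \<sigma>) i)" by simp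
    qed
    also have "\<dots> = (\<Sum>\<beta>\<in>?S. c (\<beta> \<circ> \<sigma>) * (\<Prod>i\<in>V. x i ^ \<beta> i))"
    proof -
      have "(\<Sum>\<beta>\<in>?S. c (\<beta> \<circ> \<sigma>) * (\<Prod>i\<in>V. x i ^ \<beta> i))
          = (\<Sum>\<alpha>\<in>?S. c (\<alpha> \<circ> \<sigma> \<circ> \<sigma>) * (\<Prod>i\<in>V. x i ^ (\<alpha> \<circ> \<sigma>) i))"
        using sum.reindex_bij_betw[OF bijS, of "\<lambda>\<beta>. c (\<beta> \<circ> \<sigma>) * (\<Prod>i\<in>V. x i ^ \<beta> i)"] by simp
      also have "\<dots> = (\<Sum>\<alpha>\<in>?S. c \<alpha> * (\<Prod>i\<in>V. x i ^ (\<alpha> \<circ> \<sigma>) i))"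
        using inv by (simp add: comp_assoc o_def)
      finally show ?thesis by simp
    qed
    finally show ?thesis .
  qed
  then show ?thesis unfolding is_form_def by (intro exI[where x="\<lambda>\<alpha>. c (\<alpha> \<circ> \<sigma>)"]) simp
qed

lemma form_zero_last:
  fixes F :: "(nat \<Rightarrow> 'a::comm_ring_1) \<Rightarrow> 'a"
  assumes F: "is_form {a..b} d F" and ab: "a < b"
  shows "is_form {a..b-1} d (\<lambda>x. F (x(b := 0)))"
proof -
  obtain c where c: "\<And>x. F x = (\<Sum>\<alpha>\<in>{\<alpha>\<in>exps {a..b}. (\<Sum>i\<in>{a..b}. \<alpha> i) = d}. c \<alpha> * (\<Prod>i\<in>{a..b}. x i ^ \<alpha> i))"
    using F unfolding is_form_def by blast
  let ?S = "{\<alpha>\<in>exps {a..b}. (\<Sum>i\<in>{a..b}. \<alpha> i) = d}"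
  let ?S' = "{\<alpha>\<in>exps {a..b-1}. (\<Sum>i\<in>{a..b-1}. \<alpha> i) = d}"
  have ins: "{a..b} = insert b {a..b-1}" using ab by auto
  have bn: "b \<notin> {a..b-1}" using ab by auto
  have S': "?S' = {\<alpha>\<in>?S. \<alpha> b = 0}"
  proof (intro set_eqI iffI)
    fix \<alpha> assume "\<alpha> \<in> ?S'" then show "\<alpha> \<in> {\<alpha>\<in>?S. \<alpha> b = 0}"
      using ab by (auto simp: exps_def ins)
  next
    fix \<alpha> assume "\<alpha> \<in> {\<alpha>\<in>?S. \<alpha> b = 0}" then show "\<alpha> \<in> ?S'"
      using ab unfolding exps_def ins by (auto simp: bn) (metis atLeastAtMost_iff)
  qed
  have "F (x(b := 0)) = (\<Sum>\<alpha>\<in>?S'. c \<alpha> * (\<Prod>i\<in>{a..b-1}. x i ^ \<alpha> i))" for x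
  proof -
    have "F (x(b := 0)) = (\<Sum>\<alpha>\<in>?S. c \<alpha> * (\<Prod>i\<in>{a..b}. (x(b:=0)) i ^ \<alpha> i))" using c by simp
    also have "\<dots> = (\<Sum>\<alpha>\<in>?S. if \<alpha> b = 0 then c \<alpha> * (\<Prod>i\<in>{a..b-1}. x i ^ \<alpha> i) else 0)"
    proof (rule sum.cong[OF refl])
      fix \<alpha>
      have "(\<Prod>i\<in>{a..b}. (x(b:=0)) i ^ \<alpha> i) = (x(b:=0)) b ^ \<alpha> b * (\<Prod>i\<in>{a..b-1}. (x(b:=0)) i ^ \<alpha> i)"
        unfolding ins using bn by simp
      also have "(\<Prod>i\<in>{a..b-1}. (x(b:=0)) i ^ \<alpha> i) = (\<Prod>i\<in>{a..b-1}. x i ^ \<alpha> i)"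
        using bn by (intro prod.cong) auto
      finally show "c \<alpha> * (\<Prod>i\<in>{a..b}. (x(b:=0)) i ^ \<alpha> i) = (if \<alpha> b = 0 then c \<alpha> * (\<Prod>i\<in>{a..b-1}. x i ^ \<alpha> i) else 0)"
        by (simp add: power_0_left)
    qed
    also have "\<dots> = (\<Sum>\<alpha>\<in>{\<alpha>\<in>?S. \<alpha> b = 0}. c \<alpha> * (\<Prod>i\<in>{a..b-1}. x i ^ \<alpha> i))"
      by (rule sum.inter_filter[symmetric]) (rule finite_S, simp)
    finally show ?thesis using S' by simp
  qed
  then show ?thesis unfolding is_form_def by blast
qed

lemma form_single:
  fixes F :: "(nat \<Rightarrow> 'a::comm_ring_1) \<Rightarrow> 'a"
  assumes "is_form {a..a} d F"
  shows "\<exists>c. \<forall>x. F x = c * x a ^ d"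
proof -
  obtain c where c: "\<And>x. F x = (\<Sum>\<alpha>\<in>{\<alpha>\<in>exps {a..a}. (\<Sum>i\<in>{a..a}. \<alpha> i) = d}. c \<alpha> * (\<Prod>i\<in>{a..a}. x i ^ \<alpha> i))"
    using assms unfolding is_form_def by blast
  have "{\<alpha>\<in>exps {a..a}. (\<Sum>i\<in>{a..a}. \<alpha> i) = d} = {\<lambda>j. if j = a then d else 0}"
    by (auto simp: exps_def fun_eq_iff)
  then show ?thesis using c by auto
qed

lemma inv_from_fun:
  fixes A B :: "nat \<Rightarrow> nat \<Rightarrow> 'a::comm_ring_1"
  assumes AB: "\<And>z r. r \<le> N \<Longrightarrow> lin_app N A (lin_app N B z) r = z r"
    and BA: "\<And>z r. r \<le> N \<Longrightarrow> lin_app N B (lin_app N A z) r = z r"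
  shows "invertible_mat N A"
proof -
  have gen: "(\<Sum>j\<le>N. C i j * D j k) = (if i = k then 1 else 0)"
    if CD: "\<And>z r. r \<le> N \<Longrightarrow> lin_app N C (lin_app N D z) r = z r" and ik: "i \<le> N" "k \<le> N"
    for C D :: "nat \<Rightarrow> nat \<Rightarrow> 'a" and i k
  proof -
    let ?e = "\<lambda>j. if j = k then (1::'a) else 0"
    have "lin_app N D ?e = (\<lambda>j. if j \<le> N then D j k else 0)"
      using ik by (auto simp: lin_app_def fun_eq_iff if_distrib cong: if_cong)
    then have "lin_app N C (lin_app N D ?e) i = (\<Sum>j\<le>N. C i j * D j k)"
      using ik by (simp add: lin_app_def)
    then show ?thesis using CD[of i ?e] ik by simp
  qed
  show ?thesis unfolding invertible_mat_def
    by (rule exI[of _ B]) (use gen[OF AB] gen[OF BA] in auto)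
qed

lemma lin_app_col:
  assumes "k \<le> N"
  shows "lin_app N A (x(k := x k + t)) = (\<lambda>i. lin_app N A x i + (if i \<le> N then t * A i k else 0))"
proof -
  have "(\<Sum>j\<le>N. A i j * (x(k := x k + t)) j) = (\<Sum>j\<le>N. A i j * x j) + t * A i k" for i
  proof -
    have "(\<Sum>j\<le>N. A i j * (x(k := x k + t)) j) = (\<Sum>j\<le>N. A i j * x j + (if j = k then t * A i k else 0))"
      by (rule sum.cong) (auto simp: algebra_simps)
    also have "\<dots> = (\<Sum>j\<le>N. A i j * x j) + t * A i k" using assms by (simp add: sum.distrib)
    finally show ?thesis .
  qed
  then show ?thesis by (auto simp: lin_app_def fun_eq_iff)
qed

lemma lin_app_two:
  fixes a b :: "nat \<Rightarrow> 'a::comm_ring_1"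
  assumes "\<And>r. r \<le> N \<Longrightarrow> s r \<le> N" "\<And>r. r \<le> N \<Longrightarrow> t r \<le> N"
  shows "lin_app N (\<lambda>r c. a r * (if c = s r then 1 else 0) + b r * (if c = t r then 1 else 0)) x r
     = (if r \<le> N then a r * x (s r) + b r * x (t r) else 0)"
proof (cases "r \<le> N")
  case True
  have "(\<Sum>c\<le>N. (a r * (if c = s r then 1 else 0) + b r * (if c = t r then 1 else 0)) * x c)
     = (\<Sum>c\<le>N. (if c = s r then a r * x c else 0) + (if c = t r then b r * x c else 0))"
    by (rule sum.cong) (auto simp: algebra_simps)
  also have "\<dots> = a r * x (s r) + b r * x (t r)"
    using assms[OF True] by (simp add: sum.distrib)
  finally show ?thesis using True by (simp add: lin_app_def)
qed (simp add: lin_app_def)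

lemma two_delta_sum:
  fixes F :: "nat \<Rightarrow> 'a::comm_ring_1"
  assumes "1 \<le> n"
  shows "(\<Sum>i\<le>n. (if i = 0 then a else if i = 1 then b else 0) * F i) = a * F 0 + b * F 1"
proof -
  have "(\<Sum>i\<le>n. (if i = 0 then a else if i = 1 then b else 0) * F i)
      = (\<Sum>i\<le>n. (if i = 0 then a * F i else 0) + (if i = 1 then b * F i else 0))"
    by (rule sum.cong) auto
  also have "\<dots> = a * F 0 + b * F 1" using assms by (simp add: sum.distrib)
  finally show ?thesis .
qed

theorem mainTheorem1:
  fixes f :: "(nat \<Rightarrow> 'a::{alg_closed_field, field_char_0}) \<Rightarrow> 'a"
    and n m d N :: nat
  assumes "N = n + m"
    and "perazzo_form n m d f"
    and "is_cone N f"
  shows "\<exists>A c n' m' h. invertible_mat N A \<and> c \<noteq> 0 \<and> n' + m' = N - 1 \<and>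
           perazzo_form n' m' d h \<and>
           (\<forall>x. f (lin_app N A x) = c * h x)"
proof -
  note NN = assms(1)
  obtain p g where n2: "2 \<le> n" and m2: "2 \<le> m" and d3: "3 \<le> d"
    and pf: "\<forall>i\<le>n. is_form {n+1..n+m} (d-1) (p i)" and gf: "is_form {n+1..n+m} d g"
    and ad: "alg_dep n p" and li: "lin_indep n p"
    and fe: "\<forall>x. f x = (\<Sum>i\<le>n. x i * p i x) + g x"
    using assms(2) unfolding perazzo_form_def by blast
  define V where "V = {n+1..n+m}"
  have VN: "\<And>j. j \<in> V \<Longrightarrow> j \<le> N \<and> n < j" using NN by (auto simp: V_def)
  have floc: "f x = f y" if "\<And>j. j \<le> N \<Longrightarrow> x j = y j" for x y
  proof -
    have "p i x = p i y" if "i \<le> n" for i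
      using form_local[OF pf[rule_format, OF that]] VN V_def \<open>\<And>j. j \<le> N \<Longrightarrow> x j = y j\<close> by auto
    moreover have "g x = g y" using form_local[OF gf] VN V_def \<open>\<And>j. j \<le> N \<Longrightarrow> x j = y j\<close> by auto
    moreover have "x i = y i" if "i \<le> n" for i using that NN \<open>\<And>j. j \<le> N \<Longrightarrow> x j = y j\<close> by auto
    ultimately show ?thesis using fe by simp
  qed
  obtain A0 k where k: "k \<le> N" and A0inv: "invertible_mat N A0"
    and ni: "\<And>x t. f (lin_app N A0 (x(k := t))) = f (lin_app N A0 x)"
    using assms(3) unfolding is_cone_def not_involving_def by blast
  obtain B0 where B0: "\<And>i l. i \<le> N \<Longrightarrow> l \<le> N \<Longrightarrow> (\<Sum>j\<le>N. A0 i j * B0 j l) = (if i = l then 1 else 0) \<and>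
      (\<Sum>j\<le>N. B0 i j * A0 j l) = (if i = l then 1 else 0)"
    using A0inv unfolding invertible_mat_def by blast
  have AB0: "lin_app N A0 (lin_app N B0 z) r = z r" if r: "r \<le> N" for z r
  proof -
    have "(\<Sum>j\<le>N. A0 r j * (if j \<le> N then \<Sum>l\<le>N. B0 j l * z l else 0))
        = (\<Sum>j\<le>N. \<Sum>l\<le>N. A0 r j * (B0 j l * z l))" by (simp add: sum_distrib_left)
    also have "\<dots> = (\<Sum>l\<le>N. \<Sum>j\<le>N. A0 r j * B0 j l * z l)"
      by (subst sum.swap) (simp add: mult.assoc)
    also have "\<dots> = (\<Sum>l\<le>N. (\<Sum>j\<le>N. A0 r j * B0 j l) * z l)" by (simp add: sum_distrib_right)
    also have "\<dots> = (\<Sum>l\<le>N. (if l = r then z l else 0))"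
      by (rule sum.cong) (use B0 r in auto)
    also have "\<dots> = z r" using r by simp
    finally show ?thesis using r by (simp add: lin_app_def)
  qed
  define v where "v = (\<lambda>i. if i \<le> N then A0 i k else 0)"
  have finv: "f (\<lambda>i. z i + t * v i) = f z" for z t
  proof -
    define y where "y = lin_app N B0 z"
    have "f (\<lambda>i. z i + t * v i) = f (lin_app N A0 (y(k := y k + t)))"
      by (rule floc) (simp add: lin_app_col[OF k] AB0 y_def v_def mult.commute)
    also have "\<dots> = f (lin_app N A0 y)" by (rule ni)
    also have "\<dots> = f z" by (rule floc) (simp add: AB0 y_def)
    finally show ?thesis .
  qed
  have vnz: "\<exists>i\<le>N. v i \<noteq> 0"
  proof (rule ccontr)
    assume "\<not> ?thesis"
    then have "\<And>j. j \<le> N \<Longrightarrow> A0 j k = 0" by (auto simp: v_def)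
    then have "(\<Sum>j\<le>N. B0 k j * A0 j k) = 0" by simp
    then show False using B0[OF k k] by simp
  qed
  have fdiff: "f (w(i := w i + 1)) = f w + p i w" if i: "i \<le> n" for w i
  proof -
    have iV: "i \<notin> V" using i by (auto simp: V_def)
    have pl: "p l (w(i := w i + 1)) = p l w" if "l \<le> n" for l
      using form_local[OF pf[rule_format, OF that]] iV by (auto simp: V_def)
    have gl: "g (w(i := w i + 1)) = g w"
      using form_local[OF gf] iV by (auto simp: V_def)
    have "(\<Sum>l\<le>n. (w(i := w i + 1)) l * p l (w(i := w i + 1)))
       = (\<Sum>l\<le>n. w l * p l w + (if l = i then p l w else 0))"
    proof (rule sum.cong[OF refl])
      fix l assume "l \<in> {..n}"
      then show "(w(i := w i + 1)) l * p l (w(i := w i + 1)) = w l * p l w + (if l = i then p l w else 0)"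
        using pl[of l] by (auto simp: algebra_simps)
    qed
    also have "\<dots> = (\<Sum>l\<le>n. w l * p l w) + p i w" using i by (simp add: sum.distrib)
    finally show ?thesis using fe gl by simp
  qed
  have pinv: "p i (\<lambda>j. z j + t * v j) = p i z" if i: "i \<le> n" for i z t
  proof -
    let ?zt = "\<lambda>j. z j + t * v j"
    let ?z' = "z(i := z i + 1)"
    have e: "?zt(i := ?zt i + 1) = (\<lambda>j. ?z' j + t * v j)" by (auto simp: fun_eq_iff)
    have "f ?zt + p i ?zt = f (\<lambda>j. ?z' j + t * v j)" using fdiff[OF i, of ?zt] e by simp
    also have "\<dots> = f ?z'" by (rule finv)
    also have "\<dots> = f z + p i z" by (rule fdiff[OF i])
    finally show ?thesis using finv[of z t] by simp
  qed
  have bnz: "\<exists>j0. n < j0 \<and> j0 \<le> N \<and> v j0 \<noteq> 0"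
  proof (rule ccontr)
    assume "\<not> ?thesis"
    then have v0: "\<And>j. n < j \<Longrightarrow> v j = 0" by (auto simp: v_def)
    have "(\<Sum>l\<le>n. v l * p l z) = 0" for z
    proof -
      let ?zv = "\<lambda>j. z j + 1 * v j"
      have pl: "p l ?zv = p l z" if "l \<le> n" for l
        using form_local[OF pf[rule_format, OF that]] v0 by (auto simp: V_def)
      have gl: "g ?zv = g z"
        using form_local[OF gf] v0 by (auto simp: V_def)
      have "f ?zv = (\<Sum>l\<le>n. z l * p l z) + (\<Sum>l\<le>n. v l * p l z) + g z"
        using fe gl pl by (simp add: distrib_right sum.distrib)
      moreover have "f z = (\<Sum>l\<le>n. z l * p l z) + g z" using fe by simp
      ultimately show ?thesis using finv[of z 1] by simp
    qed
    then have "\<forall>l\<le>n. v l = 0" using li unfolding lin_indep_def by blast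
    then show False using vnz v0 by (metis not_le)
  qed
  then obtain j0 where j0: "n < j0" "j0 \<le> N" and vj0: "v j0 \<noteq> 0" by blast
  define \<beta> where "\<beta> = v j0"
  define \<sigma> where "\<sigma> = (\<lambda>j. if j = j0 then N else if j = N then j0 else j)"
  have sig_inv: "\<sigma> (\<sigma> j) = j" for j by (auto simp: \<sigma>_def)
  have sig_V: "j \<in> V \<longleftrightarrow> \<sigma> j \<in> V" for j using j0 NN by (auto simp: \<sigma>_def V_def)
  have sig_N: "j \<le> N \<Longrightarrow> \<sigma> j \<le> N" for j using j0 by (auto simp: \<sigma>_def)
  have sig_n: "n < j \<Longrightarrow> n < \<sigma> j" for j using j0 NN m2 by (auto simp: \<sigma>_def)
  have sigNN: "\<sigma> j = N \<Longrightarrow> j = j0" for j by (auto simp: \<sigma>_def split: if_splits)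
  have nN: "n < N" using NN m2 by simp
  define M where "M = (\<lambda>r c. (if r \<le> n \<or> r \<noteq> j0 then 1 else 0) * (if c = (if r \<le> n then r else \<sigma> r) then 1 else 0)
        + v r * (if c = N then (1::'a) else 0))"
  have Mx: "lin_app N M x r = (if r \<le> N then (if r \<le> n \<or> r \<noteq> j0 then 1 else 0) * x (if r \<le> n then r else \<sigma> r) + v r * x N else 0)" for x r
    unfolding M_def by (rule lin_app_two) (use sig_N nN in auto)
  define Bm where "Bm = (\<lambda>r c. (if r < N then 1 else 1 / \<beta>) * (if c = (if r \<le> n then r else if r < N then \<sigma> r else j0) then 1 else 0)
        + (if r \<le> n then - v r / \<beta> else if r < N then - v (\<sigma> r) / \<beta> else 0) * (if c = j0 then (1::'a) else 0))"
  have Bx: "lin_app N Bm x r = (if r \<le> N then (if r < N then 1 else 1 / \<beta>) * x (if r \<le> n then r else if r < N then \<sigma> r else j0)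
        + (if r \<le> n then - v r / \<beta> else if r < N then - v (\<sigma> r) / \<beta> else 0) * x j0 else 0)" for x r
    unfolding Bm_def by (rule lin_app_two) (use sig_N nN j0 in auto)
  have bnz': "\<beta> \<noteq> 0" using vj0 \<beta>_def by simp
  have AB: "lin_app N M (lin_app N Bm z) r = z r" if r: "r \<le> N" for z r
  proof -
    consider "r \<le> n" | "r = j0" | "n < r" "r \<noteq> j0" "r < N" | "n < r" "r \<noteq> j0" "r = N" using r by linarith
    then show ?thesis
    proof cases
      case 1 then show ?thesis using r nN bnz' by (simp add: Mx Bx \<beta>_def field_simps)
    next
      case 2 then show ?thesis using r nN bnz' j0 by (simp add: Mx Bx \<beta>_def \<sigma>_def field_simps)
    next
      case 3 then show ?thesis using r nN bnz' j0 by (simp add: Mx Bx \<beta>_def \<sigma>_def field_simps)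
    next
      case 4 then show ?thesis using r nN bnz' j0 by (simp add: Mx Bx \<beta>_def \<sigma>_def field_simps)
    qed
  qed
  have BA: "lin_app N Bm (lin_app N M z) r = z r" if r: "r \<le> N" for z r
  proof -
    consider "r \<le> n" | "n < r" "r < N" | "r = N" using r by linarith
    then show ?thesis
    proof cases
      case 1 then show ?thesis using r nN bnz' j0 by (simp add: Mx Bx \<beta>_def field_simps)
    next
      case 2 then show ?thesis using r nN bnz' j0 by (auto simp: Mx Bx \<beta>_def \<sigma>_def field_simps)
    next
      case 3 then show ?thesis using r nN bnz' j0 by (simp add: Mx Bx \<beta>_def \<sigma>_def field_simps)
    qed
  qed
  have Minv: "invertible_mat N M" by (rule inv_from_fun[OF AB BA])
  define W where "W = (\<lambda>x. lin_app N M (x(N := 0)))"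
  have Mdec: "lin_app N M x = (\<lambda>r. W x r + x N * v r)" for x
    using nN sigNN by (auto simp: fun_eq_iff W_def Mx v_def)
  have hW: "f (lin_app N M x) = f (W x)" for x
    using finv[of "W x" "x N"] Mdec[of x] by simp
  have Wlow: "W x i = x i" if "i \<le> n" for x i
    using that nN by (simp add: W_def Mx)
  have Wsig: "W x j = ((x(N := 0)) \<circ> \<sigma>) j" if "j \<in> V" for x j
    using VN[OF that] by (auto simp: W_def Mx \<sigma>_def)
  have formW: "is_form {n+1..n+(m-1)} D (\<lambda>x. F (W x))" if F: "is_form V D F" for D and F :: "(nat \<Rightarrow> 'a) \<Rightarrow> 'a"
  proof -
    have e: "(\<lambda>x. F (W x)) = (\<lambda>x. (\<lambda>y. F (y \<circ> \<sigma>)) (x(n+m := 0)))"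
      using form_local[OF F] Wsig NN by (auto simp: fun_eq_iff)
    have "is_form {n+1..n+m} D (\<lambda>y. F (y \<circ> \<sigma>))"
      using form_perm[OF F _ sig_inv sig_V] by (simp add: V_def)
    from form_zero_last[OF this] m2 have "is_form {n+1..n+m-1} D (\<lambda>x. (\<lambda>y. F (y \<circ> \<sigma>)) (x(n+m := 0)))"
      by simp
    moreover have "n+m-1 = n+(m-1)" using m2 by simp
    ultimately show ?thesis using e by simp
  qed
  define p' where "p' = (\<lambda>i x. p i (W x))"
  define g' where "g' = (\<lambda>x. g (W x))"
  have p'f: "\<forall>i\<le>n. is_form {n+1..n+(m-1)} (d-1) (p' i)"
  proof (intro allI impI)
    fix i assume "i \<le> n"
    then have "is_form V (d-1) (p i)" using pf V_def by simp
    then show "is_form {n+1..n+(m-1)} (d-1) (p' i)" unfolding p'_def by (rule formW)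
  qed
  have g'f: "is_form {n+1..n+(m-1)} d g'"
    unfolding g'_def by (rule formW) (use gf V_def in simp)
  have ad': "alg_dep n p'"
  proof -
    obtain P where "is_poly {0..n} P" "\<exists>y. P y \<noteq> 0" "\<forall>x. P (\<lambda>i. p i x) = 0"
      using ad unfolding alg_dep_def by blast
    then show ?thesis unfolding alg_dep_def p'_def by blast
  qed
  have li': "lin_indep n p'"
    unfolding lin_indep_def
  proof (rule allI, rule impI)
    fix c assume c: "\<forall>x. (\<Sum>i\<le>n. c i * p' i x) = 0"
    have "(\<Sum>i\<le>n. c i * p i z) = 0" for z
    proof -
      define x where "x = lin_app N Bm z"
      have "p i z = p i (W x)" if i: "i \<le> n" for i
      proof -
        have "p i z = p i (lin_app N M x)"
          using form_local[OF pf[rule_format, OF i]] AB VN V_def x_def by auto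
        also have "\<dots> = p i (\<lambda>r. W x r + x N * v r)" by (simp add: Mdec)
        also have "\<dots> = p i (W x)" using pinv[OF i] by simp
        finally show ?thesis .
      qed
      then show ?thesis using c[rule_format, of x] by (simp add: p'_def)
    qed
    then show "\<forall>i\<le>n. c i = 0" using li unfolding lin_indep_def by blast
  qed
  have m3: "2 \<le> m - 1"
  proof (rule ccontr)
    assume "\<not> ?thesis"
    then have m': "m - 1 = 1" using m2 by simp
    have "\<forall>i\<in>{..n}. \<exists>c. \<forall>x. p' i x = c * x (n+1) ^ (d-1)"
    proof -
      have "\<forall>i\<le>n. is_form {n+1..n+1} (d-1) (p' i)" using p'f unfolding m' .
      then show ?thesis using form_single[of "n+1" "d-1"] by blast
    qed
    from bchoice[OF this] obtain cc where "\<forall>i\<in>{..n}. \<forall>x. p' i x = cc i * x (n+1) ^ (d-1)" by blast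
    then have cc: "\<And>i x. i \<le> n \<Longrightarrow> p' i x = cc i * x (n+1) ^ (d-1)" by simp
    show False
    proof (cases "cc 0 = 0")
      case True
      have "\<forall>x. (\<Sum>i\<le>n. (if i = 0 then 1 else if i = 1 then 0 else 0) * p' i x) = 0"
      proof
        fix x show "(\<Sum>i\<le>n. (if i = 0 then 1 else if i = 1 then 0 else 0) * p' i x) = 0"
          using two_delta_sum[of n 1 0 "\<lambda>i. p' i x"] n2 cc[of 0] True by simp
      qed
      from li'[unfolded lin_indep_def, THEN spec, THEN mp, OF this, rule_format, of 0] show False by simp
    next
      case False
      have H: "\<forall>x. (\<Sum>i\<le>n. (if i = 0 then cc 1 else if i = 1 then - cc 0 else 0) * p' i x) = 0"
      proof
        fix x show "(\<Sum>i\<le>n. (if i = 0 then cc 1 else if i = 1 then - cc 0 else 0) * p' i x) = 0"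
          using two_delta_sum[of n "cc 1" "- cc 0" "\<lambda>i. p' i x"] n2 cc[of 0] cc[of 1] by simp
      qed
      have "(if (1::nat) = 0 then cc 1 else if (1::nat) = 1 then - cc 0 else 0) = 0"
        using li'[unfolded lin_indep_def, THEN spec, THEN mp, OF H, rule_format, of 1] n2 by simp
      then show False using False by simp
    qed
  qed
  have hdec: "f (lin_app N M x) = (\<Sum>i\<le>n. x i * p' i x) + g' x" for x
    using hW fe Wlow by (simp add: p'_def g'_def)
  have "perazzo_form n (m-1) d (\<lambda>x. f (lin_app N M x))"
    unfolding perazzo_form_def using n2 m3 d3 p'f g'f ad' li' hdec
    by (intro conjI exI[of _ p'] exI[of _ g']) auto
  moreover have "n + (m - 1) = N - 1" using NN m2 by simp
  ultimately show ?thesis using Minv by (intro exI[of _ M] exI[of _ 1] exI[of _ n] exI[of _ "m-1"]) auto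
qed

end
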